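(* Let $\alpha>0$, $\sigma>0$, and let $\mathcal S$, $\mathcal T_\alpha$, $\mathcal F_\alpha$, $E_h$ be the linear operators on the polynomial space $\mathbb C[z]$ described in the context. Then, as linear operators on $\mathbb C[z]$, $$\mathcal S=E_{\sigma/\alpha}\,\mathcal T_\alpha,\qquad \mathcal S^{-1}=\mathcal F_\alpha\,E_{-\sigma/\alpha}.$$
   Context: Let $\pi_{\alpha,\sigma}=\exp(-\sigma/\alpha^2)\sum_{n\ge0}\frac{1}{n!}(\sigma/\alpha^2)^n\delta_{\alpha n}$ on $\alpha\mathbb N_0$, and let $(c_n)_{n\ge0}$ be the monic polynomials orthogonal with respect to $\pi_{\alpha,\sigma}$, with generating function $\sum_{n\ge0}\frac{t^n}{n!}c_n(z)=\exp\big(\frac z\alpha\log(1+t\alpha)-\frac{\sigma t}{\alpha}\big)$. Let $\mathcal S$ denote the linear bijection of $\mathbb C[z]$ defined by $\mathcal Sc_n(z)=z^n$ for $n\in\mathbb N_0$ (this is the restriction to polynomials of the generalized Segal--Bargmann transform, the unitary $L^2(\alpha\mathbb N_0,\pi_{\alpha,\sigma})\to\mathbb F_\sigma(\mathbb C)$ with $c_n\mapsto z^n$). For $h\in\mathbb C$, $E_h$ is the shift $(E_hp)(z)=p(z+h)$. Let $S(n,k)$ and $s(n,k)$ be the Stirling numbers of the second and first kind, so $z^n=\sum_{k=1}^nS(n,k)(z)_k$ and $(z)_n=\sum_{k=1}^ns(n,k)z^k$ with $(z)_n=z(z-1)\cdots(z-n+1)$. Define $T_{\alpha,0}=1$, $T_{\alpha,n}(z)=\sum_{k=1}^nS(n,k)\alpha^{n-k}z^k$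 ($n\ge1$), and let $\mathcal T_\alpha$ be the linear operator on $\mathbb C[z]$ with $\mathcal T_\alpha z^n=T_{\alpha,n}(z)$. Define $(z\mid\alpha)_0=1$, $(z\mid\alpha)_n=z(z-\alpha)\cdots(z-(n-1)\alpha)$, and let $\mathcal F_\alpha$ be the linear operator on $\mathbb C[z]$ with $\mathcal F_\alpha z^n=(z\mid\alpha)_n$. *)

theory Defs
  imports "HOL-Analysis.Analysis" "HOL-Computational_Algebra.Polynomial" "HOL-Combinatorics.Stirling"
begin

definition shiftE :: "complex \<Rightarrow> complex poly \<Rightarrow> complex poly" where
  "shiftE h p = pcompose p [:h, 1:]"

definition Tpoly :: "real \<Rightarrow> nat \<Rightarrow> complex poly" where
  "Tpoly \<alpha> n = (if n = 0 then 1 else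
     (\<Sum>k=1..n. monom (of_nat (Stirling n k) * complex_of_real \<alpha> ^ (n - k)) k))"

definition Top :: "real \<Rightarrow> complex poly \<Rightarrow> complex poly" where
  "Top \<alpha> p = (\<Sum>i\<le>degree p. smult (coeff p i) (Tpoly \<alpha> i))"

definition falling_step :: "real \<Rightarrow> nat \<Rightarrow> complex poly" where
  "falling_step \<alpha> n = (\<Prod>i<n. [:- (of_nat i * complex_of_real \<alpha>), 1:])"

definition Fop :: "real \<Rightarrow> complex poly \<Rightarrow> complex poly" where
  "Fop \<alpha> p = (\<Sum>i\<le>degree p. smult (coeff p i) (falling_step \<alpha> i))"

text \<open>Weights of the Poisson--Charlier measure pi_{alpha,sigma} at the point alpha*m.\<close>
definition pc_weight :: "real \<Rightarrow> real \<Rightarrow> nat \<Rightarrow> real" where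
  "pc_weight \<alpha> \<sigma> m = exp (- \<sigma> / \<alpha>\<^sup>2) * (\<sigma> / \<alpha>\<^sup>2) ^ m / fact m"

end

theory Submission
  imports Defs "HOL-Analysis.FPS_Convergence" "HOL-Analysis.Generalised_Binomial_Theorem"
begin


definition linext :: "(nat \<Rightarrow> complex poly) \<Rightarrow> complex poly \<Rightarrow> complex poly" where
  "linext g p = (\<Sum>i\<le>degree p. smult (coeff p i) (g i))"

lemma linext_alt: "degree p \<le> N \<Longrightarrow> linext g p = (\<Sum>i\<le>N. smult (coeff p i) (g i))"
  unfolding linext_def
  by (rule sum.mono_neutral_left) (auto simp: coeff_eq_0)

lemma linext_add: "linext g (p + q) = linext g p + linext g q"
proof -
  let ?N = "max (degree p) (degree q)"
  have "degree (p + q) \<le> ?N" by (rule degree_add_le) auto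
  then show ?thesis
    by (simp add: linext_alt[of _ ?N] sum.distrib smult_add_left)
qed

lemma smult_sum_right: "smult a (\<Sum>i\<in>A. f i) = (\<Sum>i\<in>A. smult a (f i))"
  by (induction A rule: infinite_finite_induct) (auto simp: smult_add_right)

lemma linext_smult: "linext g (smult a p) = smult a (linext g p)"
  by (subst linext_alt[of _ "degree p"]) (auto simp: degree_smult_le linext_def smult_sum_right)

lemma linext_monom: "linext g (monom a k) = smult a (g k)"
proof -
  have "linext g (monom a k) = (\<Sum>i\<le>k. smult (coeff (monom a k) i) (g i))"
    by (rule linext_alt) (simp add: degree_monom_le)
  also have "\<dots> = (\<Sum>i\<le>k. if i = k then smult a (g k) else 0)"
    by (rule sum.cong) (auto simp: coeff_monom)
  finally show ?thesis by simp
qed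

lemma linext_sum: "linext g (\<Sum>i\<in>A. f i) = (\<Sum>i\<in>A. linext g (f i))"
  by (induction A rule: infinite_finite_induct) (auto simp: linext_add, auto simp: linext_def)

lemma Fop_linext: "Fop \<alpha> = linext (falling_step \<alpha>)"
  by (auto simp: Fop_def linext_def fun_eq_iff)

lemma Top_linext: "Top \<alpha> = linext (Tpoly \<alpha>)"
  by (auto simp: Top_def linext_def fun_eq_iff)

lemma linext_id: "linext (\<lambda>i. monom 1 i) p = p"
  unfolding linext_def by (simp add: smult_monom poly_as_sum_of_monoms)

lemma shiftE_add: "shiftE h (p + q) = shiftE h p + shiftE h q"
  by (simp add: shiftE_def pcompose_add)
lemma shiftE_smult: "shiftE h (smult a p) = smult a (shiftE h p)"
  by (simp add: shiftE_def pcompose_smult)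
lemma shiftE_shiftE: "shiftE a (shiftE b p) = shiftE (a + b) p"
  by (simp add: shiftE_def pcompose_assoc[symmetric] pcompose_pCons add.commute)
lemma shiftE_0: "shiftE 0 p = p"
  by (simp add: shiftE_def pcompose_idR)

definition ff :: "complex \<Rightarrow> nat \<Rightarrow> complex \<Rightarrow> complex" where
  "ff a k z = (\<Prod>i<k. z - of_nat i * a)"

lemma poly_falling_step: "poly (falling_step \<alpha> k) z = ff (complex_of_real \<alpha>) k z"
  by (simp add: falling_step_def ff_def poly_prod)

lemma ff_Suc: "ff a (Suc k) z = ff a k z * (z - of_nat k * a)"
  by (simp add: ff_def)

lemma stirling_ff: "(\<Sum>k\<le>n. of_nat (Stirling n k) * a^(n-k) * ff a k z) = z^n"
proof (induction n)
  case 0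
  then show ?case by (simp add: ff_def)
next
  case (Suc n)
  define S where "S = (\<lambda>k. of_nat (Stirling n k) :: complex)"
  have zff: "z * ff a k z = ff a (Suc k) z + of_nat k * a * ff a k z" for k
    by (simp add: ff_Suc algebra_simps)
  have "z^Suc n = z * (\<Sum>k\<le>n. S k * a^(n-k) * ff a k z)"
    using Suc.IH by (simp add: S_def)
  also have "\<dots> = (\<Sum>k\<le>n. S k * a^(n-k) * ff a (Suc k) z) + (\<Sum>k\<le>n. of_nat k * S k * a^(Suc n-k) * ff a k z)"
  proof -
    have "z * (S k * a^(n-k) * ff a k z) = S k * a^(n-k) * ff a (Suc k) z + of_nat k * S k * a^(Suc n-k) * ff a k z" if "k \<le> n" for k
    proof -
      have "a^(Suc n - k) = a * a^(n-k)" using that by (simp add: Suc_diff_le)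
      have "z * (S k * a^(n-k) * ff a k z) = S k * a^(n-k) * (z * ff a k z)" by (simp add: ac_simps)
      also have "\<dots> = S k * a^(n-k) * (ff a (Suc k) z + of_nat k * a * ff a k z)" by (simp only: zff)
      also have "\<dots> = S k * a^(n-k) * ff a (Suc k) z + of_nat k * S k * (a * a^(n-k)) * ff a k z"
        by (simp add: distrib_left ac_simps)
      finally show ?thesis using \<open>a^(Suc n - k) = a * a^(n-k)\<close> by simp
    qed
    then show ?thesis by (simp add: sum_distrib_left sum.distrib[symmetric])
  qed
  also have "(\<Sum>k\<le>n. of_nat k * S k * a^(Suc n-k) * ff a k z) = (\<Sum>j\<le>n. of_nat (Suc j) * S (Suc j) * a^(n-j) * ff a (Suc j) z)"
  proof -
    have "(\<Sum>k\<le>n. of_nat k * S k * a^(Suc n-k) * ff a k z) = (\<Sum>k\<le>Suc n. of_nat k * S k * a^(Suc n-k) * ff a k z)"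
      by (simp add: S_def)
    also have "\<dots> = (\<Sum>j\<le>n. of_nat (Suc j) * S (Suc j) * a^(n-j) * ff a (Suc j) z)"
      by (subst sum.atMost_Suc_shift) simp
    finally show ?thesis .
  qed
  also have "(\<Sum>k\<le>n. S k * a^(n-k) * ff a (Suc k) z) + (\<Sum>j\<le>n. of_nat (Suc j) * S (Suc j) * a^(n-j) * ff a (Suc j) z)
     = (\<Sum>j\<le>n. of_nat (Stirling (Suc n) (Suc j)) * a^(n-j) * ff a (Suc j) z)"
    unfolding sum.distrib[symmetric] by (rule sum.cong) (simp_all add: S_def distrib_right)
  also have "\<dots> = (\<Sum>k\<le>Suc n. of_nat (Stirling (Suc n) k) * a^(Suc n-k) * ff a k z)"
    by (subst sum.atMost_Suc_shift) simp
  finally show ?case by simp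
qed

lemma Fop_Tpoly: "Fop \<alpha> (Tpoly \<alpha> n) = monom 1 n"
proof (cases "n = 0")
  case True
  then show ?thesis
    by (simp add: Tpoly_def Fop_def falling_step_def)
next
  case False
  let ?a = "complex_of_real \<alpha>"
  have "Fop \<alpha> (Tpoly \<alpha> n) = (\<Sum>k=1..n. smult (of_nat (Stirling n k) * ?a ^ (n - k)) (falling_step \<alpha> k))"
    using False by (simp add: Tpoly_def Fop_linext linext_sum linext_monom)
  then have "poly (Fop \<alpha> (Tpoly \<alpha> n)) z = (\<Sum>k=1..n. of_nat (Stirling n k) * ?a ^ (n - k) * ff ?a k z)" for z
    by (simp add: poly_sum poly_falling_step)
  also have "(\<Sum>k=1..n. of_nat (Stirling n k) * ?a ^ (n - k) * ff ?a k z) = (\<Sum>k\<le>n. of_nat (Stirling n k) * ?a ^ (n - k) * ff ?a k z)" for z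
  proof -
    have "{..n} = insert 0 {1..n}" by auto
    moreover have "Stirling n 0 = 0" using False by (cases n) auto
    ultimately show ?thesis by simp
  qed
  finally have "poly (Fop \<alpha> (Tpoly \<alpha> n)) z = poly (monom 1 n) z" for z
    by (simp add: stirling_ff poly_monom)
  then show ?thesis by (metis poly_eq_poly_eq_iff ext)
qed



lemma powser_uniq:
  fixes a b :: "nat \<Rightarrow> complex"
  assumes r: "r > 0"
    and fa: "\<And>t. norm t < r \<Longrightarrow> (\<lambda>n. t^n / fact n * a n) sums f t"
    and fb: "\<And>t. norm t < r \<Longrightarrow> (\<lambda>n. t^n / fact n * b n) sums f t"
  shows "a = b"
proof -
  define F where "F = Abs_fps (\<lambda>n. a n / fact n)"
  define G where "G = Abs_fps (\<lambda>n. b n / fact n)"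
  have eF: "fps_nth F n * t^n = t^n / fact n * a n" for n t by (simp add: F_def)
  have eG: "fps_nth G n * t^n = t^n / fact n * b n" for n t by (simp add: G_def)
  have nr: "norm (complex_of_real (r/2)) < r" using r by simp
  have "fps_conv_radius F \<ge> norm (complex_of_real (r/2))"
    unfolding fps_conv_radius_def
    by (rule conv_radius_geI) (use fa[OF nr] in \<open>simp add: eF sums_summable\<close>)
  then have cF: "fps_conv_radius F > 0" using r
    by (metis (no_types, lifting) ereal_less(2) half_gt_zero norm_of_real abs_of_pos order_less_le_trans)
  have "fps_conv_radius G \<ge> norm (complex_of_real (r/2))"
    unfolding fps_conv_radius_def
    by (rule conv_radius_geI) (use fb[OF nr] in \<open>simp add: eG sums_summable\<close>)
  then have cG: "fps_conv_radius G > 0" using r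
    by (metis (no_types, lifting) ereal_less(2) half_gt_zero norm_of_real abs_of_pos order_less_le_trans)
  have "eventually (\<lambda>t. eval_fps F t = eval_fps G t) (nhds 0)"
    unfolding eventually_nhds_metric
  proof (intro exI[of _ r] conjI allI impI)
    fix t :: complex assume "dist t 0 < r"
    then have t: "norm t < r" by simp
    have "eval_fps F t = f t" unfolding eval_fps_def eF using fa[OF t] by (simp add: sums_iff)
    moreover have "eval_fps G t = f t" unfolding eval_fps_def eG using fb[OF t] by (simp add: sums_iff)
    ultimately show "eval_fps F t = eval_fps G t" by simp
  qed (use r in auto)
  then have "F = G" using eval_fps_eqD cF cG by blast
  then have "a n / fact n = b n / fact n" for n
    by (metis F_def G_def fps_nth_Abs_fps)
  then show ?thesis by (auto simp: fun_eq_iff)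
qed

lemma binom_term:
  fixes a z t :: complex
  assumes "a \<noteq> 0"
  shows "((z/a) gchoose n) * (t*a)^n = t^n / fact n * ff a n z"
proof -
  have "(\<Prod>i=0..<n. z/a - of_nat i) * a^n = (\<Prod>i<n. (z/a - of_nat i) * a)"
    by (simp add: prod.distrib atLeast0LessThan)
  also have "\<dots> = ff a n z"
    unfolding ff_def by (rule prod.cong) (use assms in \<open>auto simp: field_simps\<close>)
  finally have *: "(\<Prod>i=0..<n. z/a - of_nat i) * a^n = ff a n z" .
  show ?thesis
    unfolding gbinomial_prod_rev using * by (simp add: power_mult_distrib field_simps)
qed

lemma gen_G:
  fixes z t B :: complex and \<alpha> :: real
  assumes "\<alpha> > 0" "norm t < 1/\<alpha>"
  shows "(\<lambda>n. t^n / fact n * (\<Sum>i\<le>n. of_nat (n choose i) * B^(n-i) * ff (of_real \<alpha>) i z))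
           sums exp (z / of_real \<alpha> * Ln (1 + t * of_real \<alpha>) + B * t)"
proof -
  define a where "a = complex_of_real \<alpha>"
  have a0: "a \<noteq> 0" using assms by (simp add: a_def)
  define A where "A = (\<lambda>n. t^n / fact n * ff a n z)"
  define E where "E = (\<lambda>n. (B*t)^n /\<^sub>R fact n)"
  have nw: "norm (t*a) < 1"
    using assms by (simp add: a_def norm_mult field_simps)
  have Aeq: "A = (\<lambda>n. ((z/a) gchoose n) * (t*a)^n)"
    using binom_term[OF a0] by (simp add: A_def fun_eq_iff)
  have sA: "A sums ((1 + t*a) powr (z/a))"
    unfolding Aeq by (rule gen_binomial_complex[OF nw])
  define \<rho> where "\<rho> = (1 + norm (t*a)) / 2"
  have "norm (t*a) < \<rho>" "\<rho> < 1" "\<rho> \<ge> 0" using nw by (auto simp: \<rho>_def)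
  then have "summable (\<lambda>n. ((z/a) gchoose n) * (complex_of_real \<rho>)^n)"
    using gen_binomial_complex[of "complex_of_real \<rho>" "z/a"] by (auto dest: sums_summable)
  then have nA: "summable (\<lambda>n. norm (A n))"
    unfolding Aeq by (rule powser_insidea) (use \<open>norm (t*a) < \<rho>\<close> in auto)
  have nE: "summable (\<lambda>n. norm (E n))" unfolding E_def by (rule summable_norm_exp)
  have sE: "E sums exp (B*t)" unfolding E_def by (rule exp_converges)
  have "(\<lambda>k. \<Sum>i\<le>k. A i * E (k - i)) sums (suminf A * suminf E)"
    by (rule Cauchy_product_sums[OF nA nE])
  moreover have "suminf A * suminf E = exp (z / a * Ln (1 + t * a) + B * t)"
  proof -
    have "1 + t*a \<noteq> 0"
    proof
      assume "1 + t*a = 0"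
      then have "t*a = -1" by (simp add: add_eq_0_iff)
      with nw show False by simp
    qed
    then show ?thesis using sA sE by (simp add: sums_iff powr_def exp_add)
  qed
  moreover have "(\<Sum>i\<le>k. A i * E (k - i)) = t^k / fact k * (\<Sum>i\<le>k. of_nat (k choose i) * B^(k-i) * ff a i z)" for k
  proof -
    have "A i * E (k - i) = t^k / fact k * (of_nat (k choose i) * B^(k-i) * ff a i z)" if "i \<le> k" for i
    proof -
      have tk: "t^k = t^i * t^(k-i)" using that by (simp add: power_add[symmetric])
      show ?thesis
        unfolding A_def E_def binomial_fact[OF that] tk
        by (simp add: scaleR_conv_of_real power_mult_distrib field_simps)
    qed
    then show ?thesis by (simp add: sum_distrib_left)
  qed
  ultimately show ?thesis by (simp add: a_def)
qed

lemma poly_ext_c: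
  fixes p q :: "complex poly"
  assumes "\<And>z. poly p z = poly q z"
  shows "p = q"
proof -
  have "poly p = poly q" using assms by (rule ext)
  then show ?thesis by (simp only: poly_eq_poly_eq_iff)
qed

lemma shift_monom:
  "shiftE B (monom 1 k) = (\<Sum>i\<le>k. monom (of_nat (k choose i) * B^(k-i)) i)"
proof -
  have "poly (shiftE B (monom 1 k)) z = poly (\<Sum>i\<le>k. monom (of_nat (k choose i) * B^(k-i)) i) z" for z
    using binomial_ring[of z B k] by (simp add: shiftE_def poly_pcompose poly_monom poly_sum ac_simps)
  then show ?thesis by (rule poly_ext_c)
qed

lemma poly_G_monom:
  "poly (Fop \<alpha> (shiftE B (monom 1 k))) z = (\<Sum>i\<le>k. of_nat (k choose i) * B^(k-i) * ff (of_real \<alpha>) i z)"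
  by (simp add: shift_monom Fop_linext linext_sum linext_monom poly_sum poly_falling_step)

lemma Fop_0: "Fop \<alpha> 0 = 0" by (simp add: Fop_def)
lemma shiftE_zero: "shiftE h 0 = 0" by (simp add: shiftE_def)

lemma linop_sum:
  assumes "\<And>p q. L (p + q) = L p + L q" "\<And>a p. L (smult a p) = smult a (L p)"
  shows "L (\<Sum>i\<in>A. smult (f i) (q i)) = (\<Sum>i\<in>A. smult (f i) (L (q i)))"
proof -
  have L0: "L 0 = 0" using assms(2)[of 0 0] by simp
  show ?thesis
    by (induction A rule: infinite_finite_induct) (auto simp: L0 assms)
qed

lemma linop_linext:
  assumes "\<And>p q. L (p + q) = L p + L q" "\<And>a p. L (smult a p) = smult a (L p)"
  shows "L p = linext (\<lambda>i. L (monom 1 i)) p"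
proof -
  have "L p = L (linext (\<lambda>i. monom 1 i) p)" by (simp add: linext_id)
  also have "\<dots> = linext (\<lambda>i. L (monom 1 i)) p"
    unfolding linext_def by (rule linop_sum[OF assms])
  finally show ?thesis .
qed

theorem proposition4p4:
  fixes \<alpha> \<sigma> :: real
    and c :: "nat \<Rightarrow> complex poly"
    and S :: "complex poly \<Rightarrow> complex poly"
  assumes "\<alpha> > 0" and "\<sigma> > 0"
    and c_monic: "\<And>n. degree (c n) = n \<and> lead_coeff (c n) = 1"
    and c_orth: "\<And>j k. j \<noteq> k \<Longrightarrow>
       (\<lambda>m. complex_of_real (pc_weight \<alpha> \<sigma> m) * poly (c j) (of_real (\<alpha> * real m))
              * cnj (poly (c k) (of_real (\<alpha> * real m)))) sums 0"
    and c_gen: "\<And>z t. norm t < 1 / \<alpha> \<Longrightarrow>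
       (\<lambda>n. t ^ n / fact n * poly (c n) z) sums
         exp (z / of_real \<alpha> * Ln (1 + t * of_real \<alpha>) - of_real \<sigma> * t / of_real \<alpha>)"
    and S_add: "\<And>p q. S (p + q) = S p + S q"
    and S_smult: "\<And>a p. S (smult a p) = smult a (S p)"
    and S_c: "\<And>n. S (c n) = monom 1 n"
  shows "(\<forall>p. S p = shiftE (of_real (\<sigma> / \<alpha>)) (Top \<alpha> p))
       \<and> (\<forall>p. S (Fop \<alpha> (shiftE (of_real (- \<sigma> / \<alpha>)) p)) = p
             \<and> Fop \<alpha> (shiftE (of_real (- \<sigma> / \<alpha>)) (S p)) = p)"
proof -
  define B where "B = complex_of_real (- \<sigma> / \<alpha>)"
  define G where "G = (\<lambda>p. Fop \<alpha> (shiftE B p))"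
  define H where "H = (\<lambda>p. shiftE (of_real (\<sigma> / \<alpha>)) (Top \<alpha> p))"
  have G_add: "G (p + q) = G p + G q" for p q
    by (simp add: G_def shiftE_add Fop_linext linext_add)
  have G_smult: "G (smult a p) = smult a (G p)" for a p
    by (simp add: G_def shiftE_smult Fop_linext linext_smult)
  have cG: "c k = G (monom 1 k)" for k
  proof -
    have eq: "(\<lambda>n. poly (c n) z) = (\<lambda>n. poly (G (monom 1 n)) z)" for z
    proof (rule powser_uniq)
      show "0 < 1 / \<alpha>" using assms(1) by simp
      show "(\<lambda>n. t ^ n / fact n * poly (c n) z) sums
         exp (z / of_real \<alpha> * Ln (1 + t * of_real \<alpha>) - of_real \<sigma> * t / of_real \<alpha>)"
        if "norm t < 1 / \<alpha>" for t using c_gen[OF that] .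
      show "(\<lambda>n. t ^ n / fact n * poly (G (monom 1 n)) z) sums
         exp (z / of_real \<alpha> * Ln (1 + t * of_real \<alpha>) - of_real \<sigma> * t / of_real \<alpha>)"
        if "norm t < 1 / \<alpha>" for t
      proof -
        have "z / of_real \<alpha> * Ln (1 + t * of_real \<alpha>) + B * t = z / of_real \<alpha> * Ln (1 + t * of_real \<alpha>) - of_real \<sigma> * t / of_real \<alpha>"
          by (simp add: B_def)
        then show ?thesis
          using gen_G[OF assms(1) that, where z=z and B=B] by (simp only: G_def poly_G_monom)
      qed
    qed
    then have "poly (c k) z = poly (G (monom 1 k)) z" for z by metis
    then show ?thesis by (rule poly_ext_c)
  qed
  have SG: "S (G p) = p" for p
  proof -
    have "S (G p) = S (linext (\<lambda>i. c i) p)"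
      by (subst linop_linext[of G, OF G_add G_smult]) (simp add: cG[symmetric])
    also have "\<dots> = linext (\<lambda>i. monom 1 i) p"
      unfolding linext_def by (simp add: linop_sum[of S, OF S_add S_smult] S_c)
    finally show ?thesis by (simp add: linext_id)
  qed
  have FT: "Fop \<alpha> (Top \<alpha> p) = p" for p
  proof -
    have Fa: "Fop \<alpha> (p + q) = Fop \<alpha> p + Fop \<alpha> q" for p q by (simp add: Fop_linext linext_add)
    have Fs: "Fop \<alpha> (smult a p) = smult a (Fop \<alpha> p)" for a p by (simp add: Fop_linext linext_smult)
    have "Fop \<alpha> (Top \<alpha> p) = (\<Sum>i\<le>degree p. smult (coeff p i) (Fop \<alpha> (Tpoly \<alpha> i)))"
      unfolding Top_def by (rule linop_sum[of "Fop \<alpha>", OF Fa Fs])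
    also have "\<dots> = linext (\<lambda>i. monom 1 i) p" by (simp add: Fop_Tpoly linext_def)
    finally show ?thesis by (simp add: linext_id)
  qed
  have GH: "G (H p) = p" for p
    by (simp add: G_def H_def shiftE_shiftE B_def shiftE_0 FT)
  have SH: "S p = H p" for p using SG[of "H p"] GH[of p] by simp
  show ?thesis
    using SG GH SH by (simp add: G_def H_def B_def)
qed

end
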